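(* Let $\breve f\colon\{0,\dots,n\}\to\mathbb{Q}$ and $\breve g\colon\{0,\dots,m\}\to\mathbb{Q}$ be convex, $\breve h$ their min-plus convolution, and $\delta\ge0$. For each $k\in\{0,\dots,n+m\}$ let $(i^+_k,k-i^+_k)\in P^+_\delta$ and $(i^-_k,k-i^-_k)\in P^-_\delta$ be the points of these paths on diagonal $k$. Then the set $R_\delta$ of $\delta$-relevant points is exactly the set of points $(i,k-i)$ with $k\in\{0,\dots,n+m\}$ and $i^-_k\le i\le i^+_k$ (i.e., the points on or below $P^+_\delta$ and on or above $P^-_\delta$).
   Context: Convex means $F(i)-F(i-1)\le F(i+1)-F(i)$ for all interior $i$. $\breve h(k)=\min_{i+j=k}\breve f(i)+\breve g(j)$. A point is a pair $(i,j)\in\{0,\dots,n\}\times\{0,\dots,m\}$ on diagonal $i+j$; it is $\delta$-relevant if $\breve f(i)+\breve g(j)\le\breve h(i+j)+\delta$. $P^+_\delta$ (resp. $P^-_\delta$) is the set of points $(i,k-i)$, $k\in\{0,\dots,n+m\}$, where $i$ is maximal (resp. minimal) such that $(i,k-i)$ is a $\delta$-relevant point. *)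

theory Defs
  imports Complex_Main
begin

definition convex_on_range :: "nat \<Rightarrow> (nat \<Rightarrow> rat) \<Rightarrow> bool" where
  "convex_on_range N F \<longleftrightarrow>
     (\<forall>i. 0 < i \<and> i < N \<longrightarrow> F i - F (i - 1) \<le> F (i + 1) - F i)"

definition minplus_conv :: "nat \<Rightarrow> nat \<Rightarrow> (nat \<Rightarrow> rat) \<Rightarrow> (nat \<Rightarrow> rat) \<Rightarrow> nat \<Rightarrow> rat" where
  "minplus_conv n m f g k = Min {f i + g j | i j. i \<le> n \<and> j \<le> m \<and> i + j = k}"

definition relevant_set :: "nat \<Rightarrow> nat \<Rightarrow> (nat \<Rightarrow> rat) \<Rightarrow> (nat \<Rightarrow> rat) \<Rightarrow> rat \<Rightarrow> (nat \<times> nat) set" where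
  "relevant_set n m f g \<delta> =
     {(i, j). i \<le> n \<and> j \<le> m \<and> f i + g j \<le> minplus_conv n m f g (i + j) + \<delta>}"

definition iplus :: "nat \<Rightarrow> nat \<Rightarrow> (nat \<Rightarrow> rat) \<Rightarrow> (nat \<Rightarrow> rat) \<Rightarrow> rat \<Rightarrow> nat \<Rightarrow> nat" where
  "iplus n m f g \<delta> k = Max {i. i \<le> k \<and> (i, k - i) \<in> relevant_set n m f g \<delta>}"

definition iminus :: "nat \<Rightarrow> nat \<Rightarrow> (nat \<Rightarrow> rat) \<Rightarrow> (nat \<Rightarrow> rat) \<Rightarrow> rat \<Rightarrow> nat \<Rightarrow> nat" where
  "iminus n m f g \<delta> k = Min {i. i \<le> k \<and> (i, k - i) \<in> relevant_set n m f g \<delta>}"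

end

theory Submission
  imports Defs
begin

lemma mono_diff:
  assumes "\<And>i. 0<i \<Longrightarrow> i<N \<Longrightarrow> F i - F (i-1) \<le> F(i+1) - F i"
  shows "j \<le> (j'::nat) \<Longrightarrow> j' < N \<Longrightarrow> F(j+1) - F j \<le> F(j'+1) - (F j' :: rat)"
proof (induction j' rule: dec_induct)
  case base then show ?case by simp
next
  case (step l)
  have "F (Suc l) - F (Suc l - 1) \<le> F (Suc l + 1) - F (Suc l)"
    using assms[of "Suc l"] step by simp
  then show ?case using step by simp
qed

lemma up_lem:
  assumes "\<And>j. i \<le> j \<Longrightarrow> j < b \<Longrightarrow> p j \<le> (p (j+1) :: rat)" "i \<le> (b::nat)"
  shows "p i \<le> p b"
  using assms(2,1)
proof (induction b rule: dec_induct)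
  case base then show ?case by simp
next
  case (step l)
  then show ?case by (metis Suc_eq_plus1 less_Suc_eq order.trans)
qed

lemma down_lem:
  assumes "\<And>j. a \<le> j \<Longrightarrow> j < i \<Longrightarrow> p (j+1) \<le> (p j :: rat)" "a \<le> (i::nat)"
  shows "p i \<le> p a"
  using assms(2,1)
proof (induction i rule: dec_induct)
  case base then show ?case by simp
next
  case (step l)
  then show ?case by (metis Suc_eq_plus1 less_Suc_eq order.trans)
qed

lemma quasi:
  assumes mono: "\<And>j j'. a \<le> j \<Longrightarrow> j \<le> j' \<Longrightarrow> j' < b \<Longrightarrow> p(j+1) - p j \<le> p(j'+1) - (p j' :: rat)"
    and "a \<le> i" "i \<le> (b::nat)"
  shows "p i \<le> max (p a) (p b)"
proof (cases "i = a")
  case True then show ?thesis by simp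
next
  case False
  then have ia: "a < i" using assms by simp
  then have i1: "i - 1 + 1 = i" by simp
  show ?thesis
  proof (cases "p i - p (i-1) \<le> 0")
    case True
    have "p i \<le> p a"
    proof (rule down_lem[OF _ assms(2)])
      fix j assume "a \<le> j" "j < i"
      then have "p(j+1) - p j \<le> p(i-1+1) - p (i-1)" using mono[of j "i-1"] ia assms by simp
      then show "p (j+1) \<le> p j" using True i1 by simp
    qed
    then show ?thesis by simp
  next
    case False
    have "p i \<le> p b"
    proof (rule up_lem[OF _ assms(3)])
      fix j assume "i \<le> j" "j < b"
      then have "p(i-1+1) - p (i-1) \<le> p(j+1) - p j" using mono[of "i-1" j] ia by simp
      then show "p j \<le> p (j+1)" using False i1 by simp
    qed
    then show ?thesis by simp
  qed
qed

lemma conv_attained: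
  assumes "k \<le> n + m"
  shows "\<exists>i j. i \<le> n \<and> j \<le> m \<and> i + j = k \<and> minplus_conv n m f g k = f i + g j"
proof -
  let ?S = "{f i + g j | i j. i \<le> n \<and> j \<le> m \<and> i + j = k}"
  have "?S \<subseteq> (\<lambda>(i,j). f i + g j) ` ({..n} \<times> {..m})" by auto
  then have fin: "finite ?S" by (rule finite_subset) auto
  have "f (min n k) + g (k - min n k) \<in> ?S" using assms
    by (intro CollectI exI[of _ "min n k"] exI[of _ "k - min n k"]) auto
  then have "?S \<noteq> {}" by blast
  from Min_in[OF fin this] show ?thesis unfolding minplus_conv_def by blast
qed

theorem mainTheorem13:
  fixes f g :: "nat \<Rightarrow> rat" and n m :: nat and \<delta> :: rat
  assumes "convex_on_range n f" and "convex_on_range m g" and "\<delta> \<ge> 0"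
  shows "relevant_set n m f g \<delta> =
           {(i, k - i) | i k. k \<le> n + m \<and> i \<le> k \<and>
              iminus n m f g \<delta> k \<le> i \<and> i \<le> iplus n m f g \<delta> k}"
proof -
  let ?R = "relevant_set n m f g \<delta>"
  define S where "S k = {i. i \<le> k \<and> (i, k - i) \<in> ?R}" for k
  have finS: "finite (S k)" for k unfolding S_def by auto
  have neS: "S k \<noteq> {}" if kk: "k \<le> n + m" for k
  proof -
    obtain i j where "i \<le> n" "j \<le> m" "i + j = k" "minplus_conv n m f g k = f i + g j"
      using conv_attained[OF kk, of f g] by blast
    then have "i \<in> S k" using assms(3) unfolding S_def relevant_set_def by auto
    then show ?thesis by blast
  qed
  have dF: "\<And>j j'. j \<le> j' \<Longrightarrow> j' < n \<Longrightarrow> f(j+1) - f j \<le> f(j'+1) - f j'"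
    by (rule mono_diff) (use assms(1) in \<open>auto simp: convex_on_range_def\<close>)
  have dG: "\<And>j j'. j \<le> j' \<Longrightarrow> j' < m \<Longrightarrow> g(j+1) - g j \<le> g(j'+1) - g j'"
    by (rule mono_diff) (use assms(2) in \<open>auto simp: convex_on_range_def\<close>)
  show ?thesis
  proof (rule set_eqI, rule iffI)
    fix x assume x: "x \<in> ?R"
    obtain i j where xe: "x = (i, j)" by force
    let ?k = "i + j"
    have xi: "i \<le> n" "j \<le> m" using x xe unfolding relevant_set_def by auto
    have "i \<in> S ?k" using x xe unfolding S_def by auto
    then have "Min (S ?k) \<le> i" "i \<le> Max (S ?k)" using finS by auto
    then show "x \<in> {(i, k - i) | i k. k \<le> n + m \<and> i \<le> k \<and>
              iminus n m f g \<delta> k \<le> i \<and> i \<le> iplus n m f g \<delta> k}"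
      using xi xe unfolding iminus_def iplus_def S_def[symmetric]
      by (intro CollectI exI[of _ i] exI[of _ ?k]) auto
  next
    fix x assume "x \<in> {(i, k - i) | i k. k \<le> n + m \<and> i \<le> k \<and>
              iminus n m f g \<delta> k \<le> i \<and> i \<le> iplus n m f g \<delta> k}"
    then obtain i k where xe: "x = (i, k - i)" and k: "k \<le> n + m" "i \<le> k"
      and lo: "Min (S k) \<le> i" and hi: "i \<le> Max (S k)"
      unfolding iminus_def iplus_def S_def[symmetric] by blast
    define a where "a = Min (S k)"
    define b where "b = Max (S k)"
    have aS: "a \<in> S k" and bS: "b \<in> S k" using finS neS[OF k(1)] a_def b_def by auto
    have ar: "a \<le> n" "k - a \<le> m" "f a + g (k - a) \<le> minplus_conv n m f g k + \<delta>" "a \<le> k"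
      using aS unfolding S_def relevant_set_def by auto
    have br: "b \<le> n" "k - b \<le> m" "f b + g (k - b) \<le> minplus_conv n m f g k + \<delta>" "b \<le> k"
      using bS unfolding S_def relevant_set_def by auto
    have ai: "a \<le> i" and ib: "i \<le> b" using lo hi a_def b_def by auto
    define p where "p j = f j + g (k - j)" for j
    have mono: "p(j+1) - p j \<le> p(j'+1) - p j'" if "a \<le> j" "j \<le> j'" "j' < b" for j j'
    proof -
      have 1: "f(j+1) - f j \<le> f(j'+1) - f j'" using dF that br by simp
      have e1: "k - (j'+1) + 1 = k - j'" "k - (j+1) + 1 = k - j" using that br by auto
      have 2: "g(k - (j'+1) + 1) - g (k - (j'+1)) \<le> g(k - (j+1) + 1) - g (k - (j+1))"
        using dG[of "k - (j'+1)" "k - (j+1)"] that ar br by simp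
      show ?thesis using 1 2 unfolding p_def e1 by simp
    qed
    have "p i \<le> max (p a) (p b)" using quasi[of a b p i, OF mono ai ib] by blast
    then have "p i \<le> minplus_conv n m f g k + \<delta>" using ar br unfolding p_def by auto
    moreover have "i + (k - i) = k" using k by simp
    ultimately show "x \<in> ?R" using xe ib br ai ar unfolding relevant_set_def p_def by auto
  qed
qed

end
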